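(* Let $\beta\in(1,2)$, $M\ge2$, and let $v=(v_0,\dots,v_M)$ be any grid function with $v_0=v_M=0$. Then $$\frac{c^{(\beta)}_\ast}{(b-a)^\beta}\,h\sum_{j=1}^{M-1}v_j^2\le h^{1-\beta}\sum_{j=1}^{M-1}\Big(\sum_{k=0}^{M}r^{(\beta)}_{j-k}v_k\Big)v_j\le 2r^{(\beta)}_0h^{1-\beta}\sum_{j=1}^{M-1}v_j^2,$$ where $c^{(\beta)}_\ast=\frac{(1-\beta)(2-\beta)(3-\beta)4^{\beta}e^{-9/4}\Psi_\beta}{3}$.
   Context: $a<b$, $h=(b-a)/M$, $x_j=a+jh$. Let $g^{(\beta)}_k=(-1)^k\binom{\beta}{k}$, $\Psi_\beta=\frac{1}{2\cos(\pi\beta/2)}$, and $r^{(\beta)}_0=2\Psi_\beta(\frac{\beta}{2}g^{(\beta)}_1+\frac{2-\beta}{2}g^{(\beta)}_0)$, $r^{(\beta)}_1=\Psi_\beta(\frac{\beta}{2}g^{(\beta)}_0+\frac{2-\beta}{2}g^{(\beta)}_1+\frac{\beta}{2}g^{(\beta)}_2)$, $r^{(\beta)}_k=\Psi_\beta(\frac{\beta}{2}g^{(\beta)}_{k+1}+\frac{2-\beta}{2}g^{(\beta)}_k)$ for $k\ge2$, $r^{(\beta)}_{-k}=r^{(\beta)}_k$ for $k\ge1$. *)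

theory Defs
  imports "HOL-Analysis.Analysis"
begin

definition gcoef :: "real \<Rightarrow> nat \<Rightarrow> real" where
  "gcoef \<beta> k = (-1) ^ k * (\<beta> gchoose k)"

definition Psi :: "real \<Rightarrow> real" where
  "Psi \<beta> = 1 / (2 * cos (pi * \<beta> / 2))"

definition rcoef_nat :: "real \<Rightarrow> nat \<Rightarrow> real" where
  "rcoef_nat \<beta> k =
     (if k = 0 then 2 * Psi \<beta> * (\<beta>/2 * gcoef \<beta> 1 + (2-\<beta>)/2 * gcoef \<beta> 0)
      else if k = 1 then Psi \<beta> * (\<beta>/2 * gcoef \<beta> 0 + (2-\<beta>)/2 * gcoef \<beta> 1
                                   + \<beta>/2 * gcoef \<beta> 2)
      else Psi \<beta> * (\<beta>/2 * gcoef \<beta> (k+1) + (2-\<beta>)/2 * gcoef \<beta> k))"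

definition rcoef :: "real \<Rightarrow> int \<Rightarrow> real" where
  "rcoef \<beta> k = rcoef_nat \<beta> (nat \<bar>k\<bar>)"

definition cstar :: "real \<Rightarrow> real" where
  "cstar \<beta> = (1-\<beta>) * (2-\<beta>) * (3-\<beta>) * 4 powr \<beta> * exp (-9/4) * Psi \<beta> / 3"

end

theory Submission
  imports Defs "HOL-Analysis.Analysis"
begin

definition Pn :: "real \<Rightarrow> nat \<Rightarrow> real" where
  "Pn \<beta> n = (\<Sum>m\<le>n. gcoef \<beta> m)"

lemma Pn_closed: "Pn \<beta> n = (-1)^n * ((\<beta>-1) gchoose n)"
proof (induction n)
  case 0 then show ?case by (simp add: Pn_def gcoef_def)
next
  case (Suc n)
  have "Pn \<beta> (Suc n) = Pn \<beta> n + gcoef \<beta> (Suc n)" by (simp add: Pn_def)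
  also have "gcoef \<beta> (Suc n) = (-1)^(Suc n) * (((\<beta>-1) gchoose n) + ((\<beta>-1) gchoose Suc n))"
    using gbinomial_Suc_Suc[of "\<beta>-1" n] by (simp add: gcoef_def)
  finally show ?case using Suc by (simp add: algebra_simps)
qed

lemma Pn_Suc: "Pn \<beta> (Suc n) = Pn \<beta> n * (real n + 1 - \<beta>) / (real n + 1)"
proof -
  have "(\<beta>-1) * ((\<beta>-1) gchoose n) = real n * ((\<beta>-1) gchoose n) + real (Suc n) * ((\<beta>-1) gchoose Suc n)"
    by (rule gbinomial_mult_1)
  then have e: "((\<beta>-1) gchoose Suc n) = ((\<beta>-1) gchoose n) * (\<beta> - 1 - real n) / (real n + 1)"
    by (simp add: field_simps)
  show ?thesis unfolding Pn_closed power_Suc e by (simp add: field_simps)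
qed

lemma Pn0: "Pn \<beta> 0 = 1" by (simp add: Pn_def gcoef_def)

lemma Pn_neg: assumes "1 < \<beta>" "\<beta> < 2" "n \<ge> 1" shows "Pn \<beta> n < 0"
  using assms(3)
proof (induction n rule: dec_induct)
  case base then show ?case using assms Pn_Suc[of \<beta> 0] by (simp add: Pn0)
next
  case (step n)
  have "(real n + 1 - \<beta>) / (real n + 1) > 0" using step assms by simp
  then have "Pn \<beta> n * ((real n + 1 - \<beta>) / (real n + 1)) < 0" using step.IH mult_neg_pos by blast
  then show ?case using Pn_Suc[of \<beta> n] by simp
qed

lemma gcoef_Pn: "k \<ge> 1 \<Longrightarrow> gcoef \<beta> k = - \<beta> * Pn \<beta> (k-1) / real k"
proof -
  assume "k \<ge> 1"
  then obtain m where k: "k = Suc m" by (cases k) auto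
  have "gcoef \<beta> k = Pn \<beta> (Suc m) - Pn \<beta> m" by (simp add: Pn_def k)
  also have "\<dots> = - \<beta> * Pn \<beta> m / (real m + 1)" by (simp add: Pn_Suc field_simps)
  finally show ?thesis by (simp add: k)
qed

lemma gcoef_pos: assumes "1 < \<beta>" "\<beta> < 2" "k \<ge> 2" shows "gcoef \<beta> k > 0"
proof -
  have "Pn \<beta> (k-1) < 0" using Pn_neg assms by simp
  then have "\<beta> * Pn \<beta> (k-1) < 0" using assms by (simp add: mult_pos_neg)
  then have "\<beta> * Pn \<beta> (k-1) / real k < 0" using assms by (simp add: divide_neg_pos)
  then show ?thesis using gcoef_Pn[of k \<beta>] assms by simp
qed

lemma gcoef012: "gcoef \<beta> 0 = 1" "gcoef \<beta> 1 = -\<beta>" "gcoef \<beta> 2 = \<beta> * (\<beta> - 1) / 2"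
  by (simp_all add: gcoef_def gbinomial_Suc numeral_2_eq_2)

lemma gcoef_Suc0: "gcoef \<beta> (Suc 0) = -\<beta>" using gcoef012(2) by simp
lemma gcoef_2: "gcoef \<beta> (Suc (Suc 0)) = \<beta> * (\<beta> - 1) / 2" using gcoef012(3) by (simp add: numeral_2_eq_2)
lemma Pn_1: "Pn \<beta> (Suc 0) = 1 - \<beta>" by (simp add: Pn_def gcoef012 gcoef_Suc0)
lemma Pn_2: "Pn \<beta> (Suc (Suc 0)) = 1 - \<beta> + \<beta> * (\<beta> - 1) / 2"
  using Pn_1[of \<beta>] by (simp add: Pn_def gcoef_2)

lemma Psi_neg: assumes "1 < \<beta>" "\<beta> < 2" shows "Psi \<beta> < 0"
proof -
  have "cos (pi - pi * \<beta> / 2) > 0"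
    using assms by (intro cos_gt_zero_pi) (auto simp: field_simps)
  then have "cos (pi * \<beta> / 2) < 0" by simp
  then show ?thesis by (simp add: Psi_def divide_neg_pos)
qed

lemma rnat_nonpos: assumes "1 < \<beta>" "\<beta> < 2" "k \<ge> 1" shows "rcoef_nat \<beta> k \<le> 0"
proof (cases "k = 1")
  case True
  have "rcoef_nat \<beta> k = Psi \<beta> * (\<beta> * (\<beta> - 1) * (\<beta> + 2) / 4)"
    using True by (simp add: rcoef_nat_def gcoef012 gcoef_Suc0) (simp add: field_simps)
  moreover have "\<beta> * (\<beta> - 1) * (\<beta> + 2) / 4 > 0" using assms by simp
  then have "Psi \<beta> * (\<beta> * (\<beta> - 1) * (\<beta> + 2) / 4) < 0" using Psi_neg[OF assms(1,2)] mult_neg_pos by blast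
  ultimately show ?thesis by linarith
next
  case False
  then have k2: "k \<ge> 2" using assms by simp
  have "\<beta>/2 * gcoef \<beta> (k+1) + (2-\<beta>)/2 * gcoef \<beta> k > 0"
    using gcoef_pos[OF assms(1,2) k2] gcoef_pos[OF assms(1,2), of "k+1"] k2 assms
    by (intro add_pos_pos mult_pos_pos) auto
  then show ?thesis using False k2 Psi_neg[OF assms(1,2)]
    by (simp add: rcoef_nat_def mult_nonpos_nonneg)
qed

definition Tn :: "real \<Rightarrow> nat \<Rightarrow> real" where
  "Tn \<beta> n = rcoef_nat \<beta> 0 / 2 + (\<Sum>m=1..n. rcoef_nat \<beta> m)"

lemma Tn_Suc: "Tn \<beta> (Suc n) = Tn \<beta> n + rcoef_nat \<beta> (Suc n)"
  by (simp add: Tn_def)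

lemma Tn_mono: assumes "1 < \<beta>" "\<beta> < 2" "m \<le> n" shows "Tn \<beta> n \<le> Tn \<beta> m"
  using assms(3)
proof (induction n rule: dec_induct)
  case base then show ?case by simp
next
  case (step n)
  then show ?case using Tn_Suc[of \<beta> n] rnat_nonpos[OF assms(1,2), of "Suc n"] by simp
qed

lemma Tn_formula: assumes "n \<ge> 1"
  shows "Tn \<beta> n = Psi \<beta> * (\<beta>/2 * Pn \<beta> (n+1) + (2-\<beta>)/2 * Pn \<beta> n)"
  using assms
proof (induction n rule: dec_induct)
  case base
  show ?case by (simp add: Tn_def rcoef_nat_def gcoef012 gcoef_Suc0 gcoef_2 Pn_1 Pn_2 field_simps)
next
  case (step n)
  have "Pn \<beta> (Suc (Suc n)) = Pn \<beta> (Suc n) + gcoef \<beta> (Suc (Suc n))" by (simp add: Pn_def)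
  moreover have "Pn \<beta> (Suc n) = Pn \<beta> n + gcoef \<beta> (Suc n)" by (simp add: Pn_def)
  ultimately show ?case using step Tn_Suc[of \<beta> n] by (simp add: rcoef_nat_def field_simps)
qed

lemma Tn0: "Tn \<beta> 0 = rcoef_nat \<beta> 0 / 2" by (simp add: Tn_def)


lemma bern_powr: fixes y b :: real assumes "y \<ge> 0" "b \<ge> 1"
  shows "(1 + y) powr b \<ge> 1 + b * y"
proof -
  have pos: "1 + y > 0" using assms by simp
  have "ln (1 / (1 + y)) \<le> 1 / (1 + y) - 1" using pos by (intro ln_le_minus_one) simp
  then have l: "ln (1 + y) \<ge> y / (1 + y)" using pos by (simp add: ln_div field_simps)
  have "(1 + y) powr (b - 1) = exp ((b - 1) * ln (1 + y))" using pos by (simp add: powr_def)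
  also have "\<dots> \<ge> 1 + (b - 1) * ln (1 + y)" by (rule exp_ge_add_one_self)
  finally have e: "(1 + y) powr (b - 1) \<ge> 1 + (b - 1) * (y / (1 + y))"
    using l assms by (smt (verit) mult_left_mono)
  have "(1 + y) powr b = (1 + y) * (1 + y) powr (b - 1)"
    using pos by (simp add: powr_diff)
  also have "\<dots> \<ge> (1 + y) * (1 + (b - 1) * (y / (1 + y)))"
    using e pos by (intro mult_left_mono) auto
  also have "(1 + y) * (1 + (b - 1) * (y / (1 + y))) = 1 + b * y" using pos by (simp add: field_simps)
  finally show ?thesis by simp
qed

lemma G_bound: assumes "1 < \<beta>" "\<beta> < 2" "n \<ge> 2"
  shows "- Pn \<beta> n * (real n - 1) powr \<beta> \<ge> (\<beta> - 1) * (2 - \<beta>) / 2"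
  using assms(3)
proof (induction n rule: dec_induct)
  case base
  have "Pn \<beta> 2 = 1 - \<beta> + \<beta> * (\<beta> - 1) / 2" using Pn_2[of \<beta>] by (simp add: numeral_2_eq_2)
  then show ?case by (simp add: field_simps)
next
  case (step n)
  define x where "x = real n"
  have x2: "x \<ge> 2" using step x_def by simp
  define y where "y = 1 / (x - 1)"
  have y0: "y \<ge> 0" using x2 y_def by simp
  have xy: "x = (x - 1) * (1 + y)" using x2 y_def by (simp add: field_simps)
  have "x powr \<beta> = (x - 1) powr \<beta> * (1 + y) powr \<beta>"
    using xy x2 y0 by (metis powr_mult diff_ge_0_iff_ge le_add_same_cancel1 one_le_numeral order_trans zero_le_one)
  also have "\<dots> \<ge> (x - 1) powr \<beta> * (1 + \<beta> * y)"
    using bern_powr[OF y0, of \<beta>] assms by (intro mult_left_mono) auto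
  finally have xp: "x powr \<beta> \<ge> (x - 1) powr \<beta> * (1 + \<beta> * y)" .
  have fac: "(x + 1 - \<beta>) / (x + 1) * (1 + \<beta> * y) \<ge> 1"
  proof -
    have "(x + 1 - \<beta>) * (1 + \<beta> * y) = (x + 1 - \<beta>) * (x - 1 + \<beta>) / (x - 1)"
      unfolding y_def using x2 by (simp add: field_simps)
    also have "(x + 1 - \<beta>) * (x - 1 + \<beta>) = x*x - (\<beta> - 1)^2" by (simp add: algebra_simps power2_eq_square)
    finally have "(x + 1 - \<beta>) * (1 + \<beta> * y) = (x*x - (\<beta> - 1)^2) / (x - 1)" .
    moreover have "(\<beta> - 1)^2 \<le> 1" using assms by (simp add: power2_eq_square) (smt (verit) mult_le_one)
    ultimately have "(x + 1 - \<beta>) * (1 + \<beta> * y) \<ge> (x*x - 1) / (x - 1)"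
      using x2 by (simp add: divide_right_mono)
    also have "(x*x - 1) / (x - 1) = x + 1" using x2 by (simp add: field_simps)
    finally show ?thesis using x2 by (simp add: field_simps)
  qed
  have pn: "- Pn \<beta> n \<ge> 0" using Pn_neg[OF assms(1,2), of n] step by simp
  have "- Pn \<beta> (Suc n) * (real (Suc n) - 1) powr \<beta> = - Pn \<beta> n * ((x + 1 - \<beta>) / (x + 1) * x powr \<beta>)"
    by (simp add: Pn_Suc x_def)
  also have "\<dots> \<ge> - Pn \<beta> n * ((x + 1 - \<beta>) / (x + 1) * ((x - 1) powr \<beta> * (1 + \<beta> * y)))"
    using xp pn x2 assms by (intro mult_left_mono) auto
  also have "(x + 1 - \<beta>) / (x + 1) * ((x - 1) powr \<beta> * (1 + \<beta> * y)) = ((x + 1 - \<beta>) / (x + 1) * (1 + \<beta> * y)) * (x - 1) powr \<beta>"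
    by simp
  also have "- Pn \<beta> n * (((x + 1 - \<beta>) / (x + 1) * (1 + \<beta> * y)) * (x - 1) powr \<beta>) \<ge> - Pn \<beta> n * (x - 1) powr \<beta>"
  proof -
    have "1 * (x - 1) powr \<beta> \<le> ((x + 1 - \<beta>) / (x + 1) * (1 + \<beta> * y)) * (x - 1) powr \<beta>"
      using fac by (intro mult_right_mono) auto
    then show ?thesis using pn by (intro mult_left_mono) auto
  qed
  finally show ?case using step.IH x_def by simp
qed

lemma K_bound: fixes \<beta> :: real assumes "1 < \<beta>" "\<beta> < 2"
  shows "(3 - \<beta>) * 4 powr \<beta> * exp (-9/4) \<le> 3"
proof -
  define t where "t = \<beta> - 1"
  have t: "0 \<le> t" "t \<le> 1" using assms t_def by auto
  have "exp ((1 - t) *\<^sub>R 0 + t *\<^sub>R ln 4) \<le> (1 - t) * exp 0 + t * exp (ln (4::real))"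
    using convex_onD[OF exp_convex] t by blast
  then have e4: "4 powr t \<le> 1 + 3 * t" by (simp add: powr_def algebra_simps)
  have "4 powr \<beta> = 4 * 4 powr t" by (simp add: t_def powr_diff)
  moreover have "3 - \<beta> = 2 - t" using t_def by simp
  ultimately have "(3 - \<beta>) * 4 powr \<beta> \<le> (2 - t) * (4 * (1 + 3 * t))"
    using e4 t by (metis mult_left_mono mult_le_cancel_left_pos diff_ge_0_iff_ge le_numeral_extra(4) zero_less_numeral order_trans one_le_numeral)
  also have "\<dots> \<le> 49 / 3"
  proof -
    have "0 \<le> (6*t - 5)^2" by simp
    then show ?thesis by (simp add: power2_eq_square algebra_simps)
  qed
  finally have a: "(3 - \<beta>) * 4 powr \<beta> \<le> 49 / 3" .
  have "exp (9/16::real) \<ge> 1 + 9/16" by (rule exp_ge_add_one_self)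
  then have "exp (9/16::real) ^ 4 \<ge> (25/16) ^ 4" by (intro power_mono) auto
  moreover have "exp (9/16::real) ^ 4 = exp (9/4)" by (simp add: exp_of_nat_mult[symmetric])
  moreover have "(25/16::real) ^ 4 \<ge> 49 / 9" by (simp add: power_divide)
  ultimately have "exp (9/4::real) \<ge> 49 / 9" by linarith
  then have "exp (-9/4::real) \<le> 9 / 49" by (simp add: exp_minus field_simps)
  then have "(3 - \<beta>) * 4 powr \<beta> * exp (-9/4) \<le> 49 / 3 * (9 / 49)"
    using a assms by (intro mult_mono) auto
  then show ?thesis by simp
qed


lemma powr_aux: fixes x \<beta> :: real assumes "x \<ge> 2" "1 < \<beta>"
  shows "(x + 1) * (x - 1) powr \<beta> \<le> (x - 1) * (x + 2) powr \<beta>"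
proof -
  have "(x - 1) powr (\<beta> - 1) \<le> (x + 2) powr (\<beta> - 1)"
    using assms by (intro powr_mono2) auto
  then have "(x + 1) * (x - 1) powr (\<beta> - 1) \<le> (x + 2) * (x + 2) powr (\<beta> - 1)"
    using assms by (intro mult_mono) auto
  then have "(x - 1) * ((x + 1) * (x - 1) powr (\<beta> - 1)) \<le> (x - 1) * ((x + 2) * (x + 2) powr (\<beta> - 1))"
    using assms by (intro mult_left_mono) auto
  then have "(x + 1) * ((x - 1) * (x - 1) powr (\<beta> - 1)) \<le> (x - 1) * ((x + 2) * (x + 2) powr (\<beta> - 1))"
    by (simp add: algebra_simps)
  moreover have "(x - 1) * (x - 1) powr (\<beta> - 1) = (x - 1) powr \<beta>"
    using assms by (simp add: powr_diff)
  moreover have "(x + 2) * (x + 2) powr (\<beta> - 1) = (x + 2) powr \<beta>"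
    using assms by (simp add: powr_diff)
  ultimately show ?thesis by simp
qed

lemma T_bound: assumes "1 < \<beta>" "\<beta> < 2" "M \<ge> 2"
  shows "cstar \<beta> / real M powr \<beta> \<le> 2 * Tn \<beta> (M - 2)"
proof -
  define X where "X = - Psi \<beta>"
  have X: "X > 0" using Psi_neg[OF assms(1,2)] X_def by simp
  define K where "K = (3 - \<beta>) * 4 powr \<beta> * exp (-9/4) / 3"
  have K1: "K \<le> 1" using K_bound[OF assms(1,2)] K_def by simp
  have K0: "K \<ge> 0" unfolding K_def using assms by (intro divide_nonneg_pos mult_nonneg_nonneg) auto
  define D where "D = X * (\<beta> - 1) * (2 - \<beta>)"
  have D: "D > 0" using X assms D_def by simp
  have cs: "cstar \<beta> = D * K" by (simp add: cstar_def D_def K_def X_def algebra_simps)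
  have Mpos: "real M powr \<beta> \<ge> 1" using assms by (intro ge_one_powr_ge_zero) auto
  show ?thesis
  proof (cases "M \<le> 3")
    case True
    have "D * K * 1 \<le> D * K * real M powr \<beta>"
      by (rule mult_left_mono[OF Mpos]) (use D K0 in auto)
    then have "cstar \<beta> / real M powr \<beta> \<le> D * K" 
      unfolding cs using Mpos D K0 by (simp add: divide_le_eq)
    also have "\<dots> \<le> D" using D K1 by (simp add: mult_le_cancel_left_pos)
    also have "D \<le> 2 * Tn \<beta> (M - 2)"
    proof (cases "M = 2")
      case True
      have "2 * Tn \<beta> (M - 2) = X * (\<beta> - 1) * (\<beta> + 2)"
        using True by (simp add: Tn0 rcoef_nat_def gcoef012 gcoef_Suc0 X_def field_simps)
      then show ?thesis unfolding D_def using X assms by (simp add: mult_le_cancel_left_pos)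
    next
      case False
      then have M3: "M = 3" using True assms by simp
      have "2 * Tn \<beta> (M - 2) = D * (\<beta> + 2) / 2"
        using M3 Tn_formula[of 1 \<beta>] by (simp add: Pn_1 Pn_2 D_def X_def field_simps)
      moreover have "D * \<beta> > 0" using D assms by simp
      ultimately show ?thesis by (simp add: field_simps)
    qed
    finally show ?thesis .
  next
    case False
    define n where "n = M - 2"
    have n2: "n \<ge> 2" using False n_def by simp
    define x where "x = real n"
    have x2: "x \<ge> 2" using n2 x_def by simp
    have Mx: "real M = x + 2" using n_def x_def assms by simp
    define p where "p = - Pn \<beta> n"
    have G: "p * (x - 1) powr \<beta> \<ge> (\<beta> - 1) * (2 - \<beta>) / 2"
      using G_bound[OF assms(1,2) n2] p_def x_def by simp
    have xp: "(x - 1) powr \<beta> > 0" using x2 by simp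
    have pb: "p \<ge> (\<beta> - 1) * (2 - \<beta>) / 2 / (x - 1) powr \<beta>"
      using G xp by (simp add: divide_le_eq)
    have T2: "2 * Tn \<beta> n = X * p * (2 * (x + 1) - \<beta>^2) / (x + 1)"
      using Tn_formula[of n \<beta>] n2 by (simp add: Pn_Suc p_def X_def x_def field_simps power2_eq_square)
    have "\<beta> * \<beta> < 2 * 2" using assms by (intro mult_strict_mono) auto
    then have A: "2 * (x + 1) - \<beta>^2 \<ge> 2 * x - 2" by (simp add: power2_eq_square)
    define q where "q = (\<beta> - 1) * (2 - \<beta>) / 2 / (x - 1) powr \<beta>"
    have q0: "q \<ge> 0" unfolding q_def using assms xp by simp
    have "q * (2 * x - 2) \<le> p * (2 * (x + 1) - \<beta>^2)"
      using pb A q0 x2 unfolding q_def[symmetric] by (intro mult_mono) auto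
    then have "X * (q * (2 * x - 2)) \<le> X * (p * (2 * (x + 1) - \<beta>^2))"
      using X by (intro mult_left_mono) auto
    then have "X * (q * (2 * x - 2)) / (x + 1) \<le> X * (p * (2 * (x + 1) - \<beta>^2)) / (x + 1)"
      using x2 by (intro divide_right_mono) auto
    also have "X * (p * (2 * (x + 1) - \<beta>^2)) / (x + 1) = 2 * Tn \<beta> n" unfolding T2 by simp
    also have "X * (q * (2 * x - 2)) / (x + 1) = D * (x - 1) / ((x + 1) * (x - 1) powr \<beta>)"
    proof -
      have n1: "(x - 1) powr \<beta> \<noteq> 0" "x + 1 \<noteq> 0" "x - 1 \<noteq> 0" using xp x2 by auto
      show ?thesis unfolding q_def D_def using n1 by (simp add: divide_simps)
    qed
    finally have L: "2 * Tn \<beta> n \<ge> D * (x - 1) / ((x + 1) * (x - 1) powr \<beta>)" .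
    have "D * K \<le> D * 1" using D K1 by (intro mult_left_mono) auto
    then have "cstar \<beta> / real M powr \<beta> \<le> D / (x + 2) powr \<beta>"
      unfolding cs Mx using x2 by (intro divide_right_mono) auto
    also have "D / (x + 2) powr \<beta> = D * (x - 1) / ((x - 1) * (x + 2) powr \<beta>)"
      using x2 D by simp
    also have "\<dots> \<le> D * (x - 1) / ((x + 1) * (x - 1) powr \<beta>)"
      using powr_aux[OF x2 assms(1)] D x2 xp
      by (intro divide_left_mono mult_pos_pos) auto
    finally show ?thesis using L n_def by simp
  qed
qed


lemma quad_bound:
  fixes w c :: "nat \<Rightarrow> nat \<Rightarrow> real" and v :: "nat \<Rightarrow> real"
  assumes "finite A" and sym: "\<And>j k. j \<in> A \<Longrightarrow> k \<in> A \<Longrightarrow> c j k = c k j"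
    and le: "\<And>j k. j \<in> A \<Longrightarrow> k \<in> A \<Longrightarrow> w j k \<le> c j k * ((v j)^2 + (v k)^2) / 2"
  shows "(\<Sum>j\<in>A. \<Sum>k\<in>A. w j k) \<le> (\<Sum>j\<in>A. (\<Sum>k\<in>A. c j k) * (v j)^2)"
proof -
  have "(\<Sum>j\<in>A. \<Sum>k\<in>A. w j k) \<le> (\<Sum>j\<in>A. \<Sum>k\<in>A. c j k * ((v j)^2 + (v k)^2) / 2)"
    using le by (intro sum_mono) auto
  also have "\<dots> = (\<Sum>j\<in>A. \<Sum>k\<in>A. c j k * (v j)^2) / 2 + (\<Sum>j\<in>A. \<Sum>k\<in>A. c j k * (v k)^2) / 2"
    by (simp only: sum_divide_distrib sum.distrib[symmetric]) (simp add: field_simps)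
  also have "(\<Sum>j\<in>A. \<Sum>k\<in>A. c j k * (v k)^2) = (\<Sum>k\<in>A. \<Sum>j\<in>A. c j k * (v k)^2)"
    by (rule sum.swap)
  also have "\<dots> = (\<Sum>k\<in>A. \<Sum>j\<in>A. c k j * (v k)^2)"
    using sym by (intro sum.cong) auto
  also have "(\<Sum>j\<in>A. \<Sum>k\<in>A. c j k * (v j)^2) / 2 + (\<Sum>k\<in>A. \<Sum>j\<in>A. c k j * (v k)^2) / 2
      = (\<Sum>j\<in>A. (\<Sum>k\<in>A. c j k) * (v j)^2)"
    by (simp add: sum_distrib_right)
  finally show ?thesis .
qed

lemma left_reindex: "(\<Sum>k=1..j. rcoef \<beta> (int j - int k)) = (\<Sum>m<j. rcoef_nat \<beta> m)"
  by (rule sum.reindex_bij_witness[of _ "\<lambda>m. j - m" "\<lambda>k. j - k"])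
     (auto simp: rcoef_def nat_diff_distrib)

lemma Tn_pair: "j \<ge> 1 \<Longrightarrow> Tn \<beta> (j - 1) + Tn \<beta> 0 = (\<Sum>m<j. rcoef_nat \<beta> m)"
proof (induction j rule: dec_induct)
  case base then show ?case by (simp add: Tn0)
next
  case (step n)
  have "Tn \<beta> n = Tn \<beta> (n - 1) + rcoef_nat \<beta> n"
    using step Tn_Suc[of \<beta> "n - 1"] by simp
  then show ?case using step by simp
qed

lemma row_sum: assumes "1 \<le> j" "j \<le> N"
  shows "(\<Sum>k=1..N. rcoef \<beta> (int j - int k)) = Tn \<beta> (j - 1) + Tn \<beta> (N - j)"
  using assms(2)
proof (induction N rule: dec_induct)
  case base
  then show ?case using left_reindex[of \<beta> j] Tn_pair[OF assms(1), of \<beta>] by simp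
next
  case (step N)
  have "Tn \<beta> (Suc N - j) = Tn \<beta> (N - j) + rcoef_nat \<beta> (Suc N - j)"
    using step Tn_Suc[of \<beta> "N - j"] by (simp add: Suc_diff_le)
  moreover have "rcoef \<beta> (int j - int (Suc N)) = rcoef_nat \<beta> (Suc N - j)"
  proof -
    have e: "\<bar>int j - int (Suc N)\<bar> = int (Suc N - j)" using step by simp
    show ?thesis unfolding rcoef_def e by simp
  qed
  ultimately show ?case using step by simp
qed


lemma cstar_nonneg: assumes "1 < \<beta>" "\<beta> < 2" shows "cstar \<beta> \<ge> 0"
proof -
  have "(1-\<beta>) * (2-\<beta>) * (3-\<beta>) * 4 powr \<beta> * exp (-9/4) \<le> 0"
    using assms by (intro mult_nonpos_nonneg mult_nonneg_nonneg) auto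
  then show ?thesis unfolding cstar_def using Psi_neg[OF assms]
    by (simp add: divide_nonneg_pos mult_nonpos_nonpos)
qed

theorem lemma3p3:
  fixes a b \<beta> :: real and M :: nat and v :: "nat \<Rightarrow> real"
  assumes "a < b" and "1 < \<beta>" and "\<beta> < 2" and "M \<ge> 2"
    and "v 0 = 0" and "v M = 0"
  defines "h \<equiv> (b - a) / real M"
  shows "cstar \<beta> / (b - a) powr \<beta> * h * (\<Sum>j=1..M-1. (v j)^2)
           \<le> h powr (1 - \<beta>) * (\<Sum>j=1..M-1. (\<Sum>k=0..M. rcoef \<beta> (int j - int k) * v k) * v j)
      \<and> h powr (1 - \<beta>) * (\<Sum>j=1..M-1. (\<Sum>k=0..M. rcoef \<beta> (int j - int k) * v k) * v j)
           \<le> 2 * rcoef \<beta> 0 * h powr (1 - \<beta>) * (\<Sum>j=1..M-1. (v j)^2)"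
proof -
  define A where "A = {1..M-1}"
  define r where "r = (\<lambda>j k. rcoef \<beta> (int j - int k))"
  define rs where "rs = (\<lambda>j. \<Sum>k\<in>A. r j k)"
  define L where "L = cstar \<beta> / real M powr \<beta>"
  define S where "S = (\<Sum>j\<in>A. (v j)^2)"
  define F where "F = (\<Sum>j\<in>A. (\<Sum>k=0..M. rcoef \<beta> (int j - int k) * v k) * v j)"
  have finA: "finite A" by (simp add: A_def)
  have rsym: "\<And>j k. r j k = r k j" by (simp add: r_def rcoef_def abs_minus_commute)
  have rdiag: "\<And>j. r j j = rcoef_nat \<beta> 0" by (simp add: r_def rcoef_def)
  have roff: "\<And>j k. j \<noteq> k \<Longrightarrow> r j k \<le> 0"
    unfolding r_def rcoef_def using rnat_nonpos[OF assms(2,3)] by simp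
  have inner: "\<And>j. (\<Sum>k=0..M. rcoef \<beta> (int j - int k) * v k) = (\<Sum>k\<in>A. r j k * v k)"
  proof -
    fix j
    show "(\<Sum>k=0..M. rcoef \<beta> (int j - int k) * v k) = (\<Sum>k\<in>A. r j k * v k)"
    proof -
      have hz: "v i = 0" if "i \<in> {0..M} - {1..M-1}" for i
      proof -
        have "i = 0 \<or> i = M" using that by auto
        then show ?thesis using assms(5,6) by auto
      qed
      show ?thesis unfolding r_def A_def
        by (rule sum.mono_neutral_cong_right) (use hz in auto)
    qed
  qed
  have F2: "F = (\<Sum>j\<in>A. \<Sum>k\<in>A. r j k * v k * v j)"
    unfolding F_def inner by (simp add: sum_distrib_right)
  have rs_eq: "\<And>j. j \<in> A \<Longrightarrow> rs j = Tn \<beta> (j - 1) + Tn \<beta> (M - 1 - j)"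
    unfolding rs_def r_def A_def using row_sum by simp
  have rsL: "\<And>j. j \<in> A \<Longrightarrow> rs j \<ge> L"
  proof -
    fix j assume j: "j \<in> A"
    have j1: "1 \<le> j" "j \<le> M - 1" using j A_def by auto
    have "j - 1 \<le> M - 2" "M - 1 - j \<le> M - 2" using j1 assms(4) by linarith+
    then have "Tn \<beta> (j - 1) \<ge> Tn \<beta> (M - 2)" "Tn \<beta> (M - 1 - j) \<ge> Tn \<beta> (M - 2)"
      using Tn_mono[OF assms(2,3)] by blast+
    then show "rs j \<ge> L" using rs_eq[OF j] T_bound[OF assms(2,3,4)] L_def by simp
  qed
  have L0: "L \<ge> 0" unfolding L_def using cstar_nonneg[OF assms(2,3)] by simp
  have "(\<Sum>j\<in>A. \<Sum>k\<in>A. - (r j k * v k * v j)) \<le> (\<Sum>j\<in>A. (\<Sum>k\<in>A. - r j k) * (v j)^2)"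
  proof (rule quad_bound[OF finA])
    show "\<And>j k. - r j k = - r k j" using rsym by simp
    fix j k assume "j \<in> A" "k \<in> A"
    show "- (r j k * v k * v j) \<le> - r j k * ((v j)^2 + (v k)^2) / 2"
    proof (cases "j = k")
      case True then show ?thesis by (simp add: power2_eq_square)
    next
      case False
      have "0 \<le> (v j - v k)^2" by simp
      then have "2 * (v k * v j) \<le> (v j)^2 + (v k)^2" by (simp add: power2_eq_square algebra_simps)
      then have "- r j k * (2 * (v k * v j)) \<le> - r j k * ((v j)^2 + (v k)^2)"
        using roff[OF False] by (intro mult_left_mono) auto
      then show ?thesis by (simp add: algebra_simps)
    qed
  qed
  then have "F \<ge> (\<Sum>j\<in>A. rs j * (v j)^2)"
    unfolding F2 rs_def by (simp add: sum_negf)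
  moreover have "(\<Sum>j\<in>A. rs j * (v j)^2) \<ge> (\<Sum>j\<in>A. L * (v j)^2)"
    using rsL by (intro sum_mono mult_right_mono) auto
  ultimately have Flow: "F \<ge> L * S" unfolding S_def by (simp add: sum_distrib_left)
  define c where "c = (\<lambda>j k. (if j = k then 2 * rcoef_nat \<beta> 0 else 0) - r j k)"
  have "(\<Sum>j\<in>A. \<Sum>k\<in>A. r j k * v k * v j) \<le> (\<Sum>j\<in>A. (\<Sum>k\<in>A. c j k) * (v j)^2)"
  proof (rule quad_bound[OF finA])
    show "\<And>j k. c j k = c k j" using rsym by (simp add: c_def)
    fix j k assume "j \<in> A" "k \<in> A"
    show "r j k * v k * v j \<le> c j k * ((v j)^2 + (v k)^2) / 2"
    proof (cases "j = k")
      case True then show ?thesis by (simp add: c_def rdiag power2_eq_square)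
    next
      case False
      have "0 \<le> (v j + v k)^2" by simp
      then have "- 2 * (v k * v j) \<le> (v j)^2 + (v k)^2" by (simp add: power2_eq_square algebra_simps)
      then have "- r j k * (- 2 * (v k * v j)) \<le> - r j k * ((v j)^2 + (v k)^2)"
        using roff[OF False] by (intro mult_left_mono) auto
      then show ?thesis using False by (simp add: c_def algebra_simps)
    qed
  qed
  moreover have "\<And>j. j \<in> A \<Longrightarrow> (\<Sum>k\<in>A. c j k) = 2 * rcoef_nat \<beta> 0 - rs j"
    using finA by (simp add: c_def rs_def sum_subtractf)
  ultimately have "F \<le> (\<Sum>j\<in>A. (2 * rcoef_nat \<beta> 0 - rs j) * (v j)^2)"
    unfolding F2 by (metis (no_types, lifting) sum.cong)
  also have "\<dots> \<le> (\<Sum>j\<in>A. (2 * rcoef_nat \<beta> 0) * (v j)^2)"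
  proof (intro sum_mono mult_right_mono)
    fix j assume "j \<in> A"
    then have "rs j \<ge> 0" using rsL[of j] L0 by linarith
    then show "2 * rcoef_nat \<beta> 0 - rs j \<le> 2 * rcoef_nat \<beta> 0" by simp
  qed simp
  finally have Fup: "F \<le> 2 * rcoef_nat \<beta> 0 * S" unfolding S_def by (simp add: sum_distrib_left)
  have hpos: "h > 0" using assms h_def by simp
  have hp: "h powr (1 - \<beta>) > 0" using hpos by simp
  have ba: "b - a = h * real M" using h_def assms by simp
  have "cstar \<beta> / (b - a) powr \<beta> * h = h powr (1 - \<beta>) * L"
  proof -
    have "(b - a) powr \<beta> = h powr \<beta> * real M powr \<beta>" unfolding ba using hpos by (simp add: powr_mult)
    moreover have "h powr (1 - \<beta>) = h / h powr \<beta>" using hpos by (simp add: powr_diff)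
    ultimately show ?thesis unfolding L_def by simp
  qed
  then have "cstar \<beta> / (b - a) powr \<beta> * h * S = h powr (1 - \<beta>) * (L * S)" by simp
  also have "\<dots> \<le> h powr (1 - \<beta>) * F" using Flow hp by (intro mult_left_mono) auto
  finally have P1: "cstar \<beta> / (b - a) powr \<beta> * h * S \<le> h powr (1 - \<beta>) * F" .
  have "h powr (1 - \<beta>) * F \<le> h powr (1 - \<beta>) * (2 * rcoef_nat \<beta> 0 * S)" using Fup hp by (intro mult_left_mono) auto
  then have P2: "h powr (1 - \<beta>) * F \<le> 2 * rcoef \<beta> 0 * h powr (1 - \<beta>) * S" by (simp add: rcoef_def mult_ac)
  show ?thesis using P1 P2 unfolding S_def F_def A_def by simp
qed

end
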